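(* Let $\ell\ge 2$, $A\ge 2$, $H\ge \ell+1$ be integers and let $\pi$ be an $\ell$-step model predictive control (MPC) agent whose values $\{V_h(s)\}$ are computed by a procedure satisfying the following assumption: for every $h\in[H]$ there is a function $f_h:\mathcal{D}\to\mathbb{R}_+$, where $\mathcal{D}$ is the set of Borel distributions on $[0,1]^A$, such that whenever $s$ is a semi-terminal state at step $h$ with joint reward distribution $\mathcal{R}_h(s)\in\mathcal{D}$ over its actions, $V_h(s)=f_h(\mathcal{R}_h(s))$. Then there exists an episodic tabular MDP with $A$ actions, horizon $H$, at most $S\le A^{\ell}+\ell+1$ states and deterministic transitions, and an initial state $s_1$, for which $\frac{V^{\pi}_1(s_1)}{V^*_1(s_1)}\le A^{1-\ell/2}$, where $V^*_1(s_1)$ is the optimal value among $\ell$-step lookahead policies. Moreover, in the constructed environments there exists an MPC agent (for some choice of values) whose value equals $V^*_1(s_1)$.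
   Context: Episodic tabular MDP: finite state space $\mathcal{S}$, $A$ actions, horizon $H$, rewards in $[0,1]$ with distributions $\mathcal{R}_h(s,a)$, transitions $P_h$, independent across steps (arbitrarily correlated across state-actions within a step). $\ell$-step lookahead information $I_{h,\ell_h}(s)$ at step $h$ in state $s$ ($\ell_h=\min\{\ell,H-h+1\}$) consists of the realized rewards and next states along all trajectories from $s$ over steps $h,\dots,h+\ell_h-1$ under every deterministic Markov policy; for a deterministic Markov policy $\phi$, $\mathfrak{R}_{t\mid h}(s,\phi,I)$ and $\mathfrak{s}_{t\mid h}(s,\phi,I)$ denote the reward at step $t$ and the state at step $t$ obtained from $s_h=s$ following $\phi$ under the realization $I$. An $\ell$-step lookahead policy chooses actions using the current state and the lookahead observed at each step. An $\ell$-step MPC agent is specified by values $V_h(s)$ for all $h,s$; at each step $h$ in state $s$, upon observing $I=I_{h,\ell_h}(s)$, it computes $\phi\in\arg\max_{\phi}\{\sum_{t=h}^{h+\ell_h-1}\mathfrak{R}_{t\mid h}(s,\phi,I)+V_{h+\ell_h}(\mathfrak{s}_{h+\ell_h\mid h}(s,\phi,I))\}$ over deterministic Markov policies, plays only $\phi_h(s)$, and repeats at the next step with the updated lookahead. A state $s_T$ is terminal if for all $h,a$ it transitions to itself with probability one and yields zero reward; a state $s$ is semi-terminal at step $h$ if every action leads from $s$ to a terminal state with probability one (rewards at $s$ may be random). *)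

theory Defs
  imports "HOL-Probability.Probability"
begin

text \<open>
  States are natural numbers in {..<nS}, actions are natural numbers in {..<A},
  steps are 1..H.  At every step h the environment draws a joint realization
  omega :: state => action => (reward, next state) from the pmf D h (arbitrary correlation
  across state-action pairs within a step); realizations of different steps are independent
  (product pmf over the steps 1..H).  An MDP is the pair (nS, D).
\<close>

type_synonym realization = "nat \<Rightarrow> nat \<Rightarrow> real \<times> nat"
type_synonym realizations = "nat \<Rightarrow> realization"
type_synonym mdp_dist = "nat \<Rightarrow> realization pmf"
type_synonym markov_policy = "nat \<Rightarrow> nat \<Rightarrow> nat"
type_synonym lookahead_info = "markov_policy \<Rightarrow> (real \<times> nat) list"
type_synonym lookahead_policy = "nat \<Rightarrow> nat \<Rightarrow> lookahead_info \<Rightarrow> nat"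

definition valid_mdp :: "nat \<Rightarrow> nat \<Rightarrow> nat \<Rightarrow> mdp_dist \<Rightarrow> bool" where
  "valid_mdp A H nS D \<longleftrightarrow>
     (\<forall>h\<in>{1..H}. \<forall>\<omega>\<in>set_pmf (D h). \<forall>s<nS. \<forall>a<A.
        fst (\<omega> s a) \<in> {0..1} \<and> snd (\<omega> s a) < nS)"

definition deterministic_transitions :: "nat \<Rightarrow> nat \<Rightarrow> nat \<Rightarrow> mdp_dist \<Rightarrow> bool" where
  "deterministic_transitions A H nS D \<longleftrightarrow>
     (\<forall>h\<in>{1..H}. \<forall>s<nS. \<forall>a<A. \<exists>s'. \<forall>\<omega>\<in>set_pmf (D h). snd (\<omega> s a) = s')"

definition terminal_state :: "nat \<Rightarrow> nat \<Rightarrow> nat \<Rightarrow> mdp_dist \<Rightarrow> nat \<Rightarrow> bool" where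
  "terminal_state A H nS D sT \<longleftrightarrow> sT < nS \<and>
     (\<forall>h\<in>{1..H}. \<forall>a<A. \<forall>\<omega>\<in>set_pmf (D h). \<omega> sT a = (0, sT))"

definition semi_terminal :: "nat \<Rightarrow> nat \<Rightarrow> nat \<Rightarrow> mdp_dist \<Rightarrow> nat \<Rightarrow> nat \<Rightarrow> bool" where
  "semi_terminal A H nS D h s \<longleftrightarrow> s < nS \<and>
     (\<forall>a<A. \<forall>\<omega>\<in>set_pmf (D h). terminal_state A H nS D (snd (\<omega> s a)))"

definition reward_dist :: "nat \<Rightarrow> mdp_dist \<Rightarrow> nat \<Rightarrow> nat \<Rightarrow> (nat \<Rightarrow> real) pmf" where
  "reward_dist A D h s = map_pmf (\<lambda>\<omega> a. if a < A then fst (\<omega> s a) else 0) (D h)"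

definition valid_markov_policy :: "nat \<Rightarrow> markov_policy \<Rightarrow> bool" where
  "valid_markov_policy A \<phi> \<longleftrightarrow> (\<forall>t x. \<phi> t x < A)"

text \<open>Trajectory (list of (reward at step t, state at step t+1)) of n steps from state x at step t.\<close>
fun run :: "realizations \<Rightarrow> markov_policy \<Rightarrow> nat \<Rightarrow> nat \<Rightarrow> nat \<Rightarrow> (real \<times> nat) list" where
  "run \<omega>s \<phi> t x 0 = []"
| "run \<omega>s \<phi> t x (Suc n) = \<omega>s t x (\<phi> t x) # run \<omega>s \<phi> (Suc t) (snd (\<omega>s t x (\<phi> t x))) n"

definition horizon_len :: "nat \<Rightarrow> nat \<Rightarrow> nat \<Rightarrow> nat" where
  "horizon_len H l h = min l (H - h + 1)"

text \<open>The l-step lookahead information I_{h,l_h}(s): for every deterministic Markov policy the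
  realized rewards and next states along its trajectory from s over steps h..h+l_h-1.\<close>
definition lookahead :: "nat \<Rightarrow> nat \<Rightarrow> nat \<Rightarrow> nat \<Rightarrow> nat \<Rightarrow> realizations \<Rightarrow> lookahead_info" where
  "lookahead A H l h s \<omega>s =
     (\<lambda>\<phi>. if valid_markov_policy A \<phi> then run \<omega>s \<phi> h s (horizon_len H l h) else [])"

definition is_lookahead_policy :: "nat \<Rightarrow> lookahead_policy \<Rightarrow> bool" where
  "is_lookahead_policy A \<pi> \<longleftrightarrow> (\<forall>h x I. \<pi> h x I < A)"

fun play :: "nat \<Rightarrow> nat \<Rightarrow> nat \<Rightarrow> lookahead_policy \<Rightarrow> realizations \<Rightarrow> nat \<Rightarrow> nat \<Rightarrow> nat \<Rightarrow> real" where
  "play A H l \<pi> \<omega>s 0 h x = 0"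
| "play A H l \<pi> \<omega>s (Suc n) h x =
     (let a = \<pi> h x (lookahead A H l h x \<omega>s)
      in fst (\<omega>s h x a) + play A H l \<pi> \<omega>s n (Suc h) (snd (\<omega>s h x a)))"

definition policy_value :: "nat \<Rightarrow> nat \<Rightarrow> nat \<Rightarrow> mdp_dist \<Rightarrow> lookahead_policy \<Rightarrow> nat \<Rightarrow> real" where
  "policy_value A H l D \<pi> s1 =
     measure_pmf.expectation (Pi_pmf {1..H} (\<lambda>_ _. (0, 0)) D) (\<lambda>\<omega>s. play A H l \<pi> \<omega>s H 1 s1)"

definition opt_value :: "nat \<Rightarrow> nat \<Rightarrow> nat \<Rightarrow> mdp_dist \<Rightarrow> nat \<Rightarrow> real" where
  "opt_value A H l D s1 = (SUP \<pi>\<in>{\<pi>. is_lookahead_policy A \<pi>}. policy_value A H l D \<pi> s1)"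

definition mpc_objective :: "nat \<Rightarrow> nat \<Rightarrow> (nat \<Rightarrow> nat \<Rightarrow> real) \<Rightarrow> nat \<Rightarrow> lookahead_info \<Rightarrow> markov_policy \<Rightarrow> real" where
  "mpc_objective H l V h I \<phi> =
     (let L = horizon_len H l h; tr = I \<phi>
      in (\<Sum>k<L. fst (tr ! k)) + (if h + L \<le> H then V (h + L) (snd (tr ! (L - 1))) else 0))"

definition mpc_argmax :: "nat \<Rightarrow> nat \<Rightarrow> nat \<Rightarrow> (nat \<Rightarrow> nat \<Rightarrow> real) \<Rightarrow> nat \<Rightarrow> lookahead_info \<Rightarrow> markov_policy set" where
  "mpc_argmax A H l V h I = {\<phi>. valid_markov_policy A \<phi> \<and>
     (\<forall>\<psi>. valid_markov_policy A \<psi> \<longrightarrow> mpc_objective H l V h I \<psi> \<le> mpc_objective H l V h I \<phi>)}"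

text \<open>pi is an l-step MPC agent with values V: at each step h in state x, upon observing the
  lookahead I it plays phi_h(x) for some maximizer phi (arbitrary tie-breaking).\<close>
definition is_mpc_agent :: "nat \<Rightarrow> nat \<Rightarrow> nat \<Rightarrow> (nat \<Rightarrow> nat \<Rightarrow> real) \<Rightarrow> lookahead_policy \<Rightarrow> bool" where
  "is_mpc_agent A H l V \<pi> \<longleftrightarrow> is_lookahead_policy A \<pi> \<and>
     (\<forall>h\<in>{1..H}. \<forall>x \<omega>s. \<exists>\<phi>\<in>mpc_argmax A H l V h (lookahead A H l h x \<omega>s).
        \<pi> h x (lookahead A H l h x \<omega>s) = \<phi> h x)"

end

theory Submission
  imports Defs
begin


fun stt :: "realizations \<Rightarrow> markov_policy \<Rightarrow> nat \<Rightarrow> nat \<Rightarrow> nat \<Rightarrow> nat" where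
  "stt \<omega>s \<phi> t x 0 = x"
| "stt \<omega>s \<phi> t x (Suc n) = stt \<omega>s \<phi> (Suc t) (snd (\<omega>s t x (\<phi> t x))) n"

fun rs :: "realizations \<Rightarrow> markov_policy \<Rightarrow> nat \<Rightarrow> nat \<Rightarrow> nat \<Rightarrow> real" where
  "rs \<omega>s \<phi> t x 0 = 0"
| "rs \<omega>s \<phi> t x (Suc n) = fst (\<omega>s t x (\<phi> t x)) + rs \<omega>s \<phi> (Suc t) (snd (\<omega>s t x (\<phi> t x))) n"

lemma run_sum: "(\<Sum>k<n. fst (run \<omega>s \<phi> t x n ! k)) = rs \<omega>s \<phi> t x n"
proof (induction n arbitrary: t x)
  case 0 then show ?case by simp
next
  case (Suc n)
  show ?case
    unfolding sum.lessThan_Suc_shift using Suc.IH by simp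
qed

lemma run_last: "snd (run \<omega>s \<phi> t x (Suc n) ! n) = stt \<omega>s \<phi> t x (Suc n)"
proof (induction n arbitrary: t x)
  case 0 then show ?case by simp
next
  case (Suc n) then show ?case by simp
qed

lemma stt_add: "stt \<omega>s \<phi> t x (m + n) = stt \<omega>s \<phi> (t + m) (stt \<omega>s \<phi> t x m) n"
  by (induction m arbitrary: t x) auto

lemma rs_add: "rs \<omega>s \<phi> t x (m + n) = rs \<omega>s \<phi> t x m + rs \<omega>s \<phi> (t + m) (stt \<omega>s \<phi> t x m) n"
  by (induction m arbitrary: t x) auto

lemma run_cong: "(\<And>i. t \<le> i \<Longrightarrow> i < t + n \<Longrightarrow> \<omega>s i = \<omega>s' i) \<Longrightarrow> run \<omega>s \<phi> t x n = run \<omega>s' \<phi> t x n"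
proof (induction n arbitrary: t x)
  case 0 then show ?case by simp
next
  case (Suc n)
  have e: "\<omega>s t = \<omega>s' t" using Suc.prems by simp
  have "run \<omega>s \<phi> (Suc t) y n = run \<omega>s' \<phi> (Suc t) y n" for y
    by (rule Suc.IH) (use Suc.prems in auto)
  then show ?case by (simp add: e)
qed

lemma obj_eq:
  assumes "valid_markov_policy A \<phi>" "horizon_len H l h > 0"
  shows "mpc_objective H l V h (lookahead A H l h x \<omega>s) \<phi> =
     rs \<omega>s \<phi> h x (horizon_len H l h) + (if h + horizon_len H l h \<le> H then V (h + horizon_len H l h) (stt \<omega>s \<phi> h x (horizon_len H l h)) else 0)"
proof -
  obtain m where m: "horizon_len H l h = Suc m" using assms(2) by (cases "horizon_len H l h") auto
  show ?thesis using assms(1) unfolding mpc_objective_def lookahead_def Let_def m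
    using run_sum[where n="Suc m" and \<omega>s=\<omega>s and \<phi>=\<phi> and t=h and x=x] run_last[where n=m and \<omega>s=\<omega>s and \<phi>=\<phi> and t=h and x=x] by simp
qed

fun runa :: "realizations \<Rightarrow> nat list \<Rightarrow> nat \<Rightarrow> nat \<Rightarrow> (real \<times> nat) list" where
  "runa \<omega>s [] t x = []"
| "runa \<omega>s (a # as) t x = \<omega>s t x a # runa \<omega>s as (Suc t) (snd (\<omega>s t x a))"

fun acts :: "realizations \<Rightarrow> markov_policy \<Rightarrow> nat \<Rightarrow> nat \<Rightarrow> nat \<Rightarrow> nat list" where
  "acts \<omega>s \<phi> t x 0 = []"
| "acts \<omega>s \<phi> t x (Suc n) = \<phi> t x # acts \<omega>s \<phi> (Suc t) (snd (\<omega>s t x (\<phi> t x))) n"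

lemma run_runa: "run \<omega>s \<phi> t x n = runa \<omega>s (acts \<omega>s \<phi> t x n) t x"
  by (induction n arbitrary: t x) auto

lemma acts_in: "valid_markov_policy A \<phi> \<Longrightarrow> acts \<omega>s \<phi> t x n \<in> {as. set as \<subseteq> {..<A} \<and> length as = n}"
  by (induction n arbitrary: t x) (auto simp: valid_markov_policy_def)

lemma argmax_nonempty:
  assumes "A > 0"
  shows "mpc_argmax A H l V h (lookahead A H l h x \<omega>s) \<noteq> {}"
proof -
  let ?I = "lookahead A H l h x \<omega>s"
  let ?L = "horizon_len H l h"
  let ?F = "\<lambda>tr. (let L = ?L in (\<Sum>k<L. fst (tr ! k)) + (if h + L \<le> H then V (h + L) (snd (tr ! (L - 1))) else 0))"
  let ?S = "{as. set as \<subseteq> {..<A} \<and> length as = ?L}"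
  let ?O = "(\<lambda>\<phi>. mpc_objective H l V h ?I \<phi>) ` {\<phi>. valid_markov_policy A \<phi>}"
  have sub: "?O \<subseteq> (\<lambda>as. ?F (runa \<omega>s as h x)) ` ?S"
  proof
    fix v assume "v \<in> ?O"
    then obtain \<phi> where v: "v = mpc_objective H l V h ?I \<phi>" and p: "valid_markov_policy A \<phi>" by auto
    have "v = ?F (runa \<omega>s (acts \<omega>s \<phi> h x ?L) h x)"
      unfolding v mpc_objective_def lookahead_def using p by (simp add: run_runa Let_def)
    then show "v \<in> (\<lambda>as. ?F (runa \<omega>s as h x)) ` ?S" using acts_in[OF p] by blast
  qed
  have fin: "finite ?O"
    by (rule finite_subset[OF sub]) (intro finite_imageI finite_lists_length_eq, simp)
  have p0: "valid_markov_policy A (\<lambda>_ _. 0)" using assms by (simp add: valid_markov_policy_def)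
  then have ne: "?O \<noteq> {}" by blast
  have "Max ?O \<in> ?O" using Max_in[OF fin ne] .
  then obtain \<phi> where p: "valid_markov_policy A \<phi>" and mx: "mpc_objective H l V h ?I \<phi> = Max ?O" by auto
  have "\<phi> \<in> mpc_argmax A H l V h ?I"
    unfolding mpc_argmax_def using p mx Max_ge[OF fin] by auto
  then show ?thesis by blast
qed

definition mpcpi :: "nat \<Rightarrow> nat \<Rightarrow> nat \<Rightarrow> (nat \<Rightarrow> nat \<Rightarrow> real) \<Rightarrow> lookahead_policy" where
  "mpcpi A H l V h x I = (if mpc_argmax A H l V h I \<noteq> {} then (SOME \<phi>. \<phi> \<in> mpc_argmax A H l V h I) h x else 0)"

lemma mpcpi_is: assumes "A > 0" shows "is_mpc_agent A H l V (mpcpi A H l V)"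
proof -
  have "is_lookahead_policy A (mpcpi A H l V)"
    unfolding is_lookahead_policy_def mpcpi_def
  proof (intro allI)
    fix h x I
    show "(if mpc_argmax A H l V h I \<noteq> {} then (SOME \<phi>. \<phi> \<in> mpc_argmax A H l V h I) h x else 0) < A"
    proof (cases "mpc_argmax A H l V h I \<noteq> {}")
      case True
      then have "(SOME \<phi>. \<phi> \<in> mpc_argmax A H l V h I) \<in> mpc_argmax A H l V h I" by (simp add: some_in_eq)
      then show ?thesis using True by (simp add: mpc_argmax_def valid_markov_policy_def)
    qed (use assms in simp)
  qed
  moreover have "\<exists>\<phi>\<in>mpc_argmax A H l V h (lookahead A H l h x \<omega>s).
        mpcpi A H l V h x (lookahead A H l h x \<omega>s) = \<phi> h x" for h x \<omega>s
  proof -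
    have ne: "mpc_argmax A H l V h (lookahead A H l h x \<omega>s) \<noteq> {}" by (rule argmax_nonempty[OF assms])
    then have "(SOME \<phi>. \<phi> \<in> mpc_argmax A H l V h (lookahead A H l h x \<omega>s)) \<in> mpc_argmax A H l V h (lookahead A H l h x \<omega>s)"
      by (simp add: some_in_eq)
    then show ?thesis using ne unfolding mpcpi_def by auto
  qed
  ultimately show ?thesis unfolding is_mpc_agent_def by blast
qed



definition step1R :: "real \<Rightarrow> realization" where
  "step1R r = (\<lambda>s a. if s = 1 then (if a = 0 then (0, 2) else (r, 0)) else (0, 0))"
definition midR :: "nat \<Rightarrow> nat \<Rightarrow> bool \<Rightarrow> nat \<Rightarrow> realization" where
  "midR A N br j0 = (\<lambda>s a. if 2 \<le> s then (0, if br then 2 + ((s - 2) * A + a) mod N else 2 + j0) else (0, 0))"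
definition leafR :: "nat \<Rightarrow> realization" where
  "leafR J = (\<lambda>s a. (if s = J + 2 then 1 else 0, 0))"
definition zeroR :: realization where
  "zeroR = (\<lambda>s a. (0, 0))"
definition envD :: "nat \<Rightarrow> nat \<Rightarrow> bool \<Rightarrow> real \<Rightarrow> nat \<Rightarrow> mdp_dist" where
  "envD A l br r j0 h = (if h = 1 then return_pmf (step1R r)
      else if h \<le> l then return_pmf (midR A (A ^ (l - 1)) br j0)
      else if h = l + 1 then map_pmf leafR (pmf_of_set {..<A ^ (l - 1)})
      else return_pmf zeroR)"

lemma envD_leaf: "l \<ge> 1 \<Longrightarrow> envD A l br r j0 (l + 1) = map_pmf leafR (pmf_of_set {..<A ^ (l - 1)})"
  by (simp add: envD_def)

locale env =
  fixes A l H :: nat and br :: bool and r :: real and j0 :: nat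
  assumes l2: "l \<ge> 2" and A2: "A \<ge> 2" and Hl: "H \<ge> l + 1" and j0N: "j0 < A ^ (l - 1)"
    and r0: "0 \<le> r" and r1: "r \<le> 1"
begin

abbreviation "N \<equiv> A ^ (l - 1)"
abbreviation "D \<equiv> envD A l br r j0"
abbreviation "P \<equiv> Pi_pmf {1..H} (\<lambda>_ _. (0, 0)) D"

lemma Npos: "N > 0" using A2 by simp

lemma setN: "0 < (n::nat) \<Longrightarrow> set_pmf (pmf_of_set {..<n}) = {..<n}"
  by (subst set_pmf_of_set) auto

lemma setD: "set_pmf (D h) = (if h = 1 then {step1R r} else if h \<le> l then {midR A N br j0}
   else if h = l + 1 then leafR ` {..<N} else {zeroR})"
  using Npos by (simp add: envD_def setN)

definition good :: "realizations \<Rightarrow> bool" where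
  "good \<omega>s \<longleftrightarrow> (\<forall>h\<in>{1..H}. \<omega>s h \<in> set_pmf (D h))"

lemma AE_good: "AE \<omega>s in measure_pmf P. good \<omega>s"
  unfolding AE_measure_pmf_iff set_Pi_pmf[OF finite_atLeastAtMost] good_def PiE_dflt_def by auto

lemma fin_P: "finite (set_pmf P)"
  unfolding set_Pi_pmf[OF finite_atLeastAtMost]
  by (rule finite_PiE_dflt) (auto simp: setD)

lemma integ: "integrable (measure_pmf P) (f :: _ \<Rightarrow> real)"
  by (rule integrable_measure_pmf_finite[OF fin_P])

lemma goodD: "good \<omega>s \<Longrightarrow> 1 \<le> h \<Longrightarrow> h \<le> H \<Longrightarrow> \<omega>s h \<in> set_pmf (D h)"
  unfolding good_def by auto
lemma good1: "good \<omega>s \<Longrightarrow> \<omega>s 1 = step1R r"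
  using goodD[of \<omega>s 1] Hl unfolding setD by auto
lemma goodm: "good \<omega>s \<Longrightarrow> 2 \<le> h \<Longrightarrow> h \<le> l \<Longrightarrow> \<omega>s h = midR A N br j0"
  using goodD[of \<omega>s h] Hl unfolding setD by auto
lemma goodl: "good \<omega>s \<Longrightarrow> \<exists>J<N. \<omega>s (l + 1) = leafR J"
  using goodD[of \<omega>s "l+1"] Hl l2 unfolding setD by auto
lemma goodz: "good \<omega>s \<Longrightarrow> l + 2 \<le> h \<Longrightarrow> h \<le> H \<Longrightarrow> \<omega>s h = zeroR"
  using goodD[of \<omega>s h] Hl unfolding setD by auto

lemma valid: "valid_mdp A H (N + 2) D"
  unfolding valid_mdp_def setD
  using r0 r1 j0N by (auto simp: step1R_def midR_def leafR_def zeroR_def Npos)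

lemma det: "deterministic_transitions A H (N + 2) D"
  unfolding deterministic_transitions_def setD
  by (auto simp: step1R_def midR_def leafR_def zeroR_def)

lemma terminal0: "terminal_state A H (N + 2) D 0"
  unfolding terminal_state_def setD
  by (auto simp: step1R_def midR_def leafR_def zeroR_def)

lemma semi: "s < N + 2 \<Longrightarrow> semi_terminal A H (N + 2) D (l + 1) s"
  unfolding semi_terminal_def using terminal0 l2 by (auto simp: setD leafR_def)

lemma rs_mid0: "good \<omega>s \<Longrightarrow> 2 \<le> k \<Longrightarrow> k + m \<le> l + 1 \<Longrightarrow> rs \<omega>s \<phi> k x m = 0"
proof (induction m arbitrary: k x)
  case (Suc m)
  then show ?case using goodm[OF Suc.prems(1), of k] by (simp add: midR_def)
qed simp

lemma rs_late0: "good \<omega>s \<Longrightarrow> l + 2 \<le> k \<Longrightarrow> k + m \<le> H + 1 \<Longrightarrow> rs \<omega>s \<phi> k x m = 0"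
proof (induction m arbitrary: k x)
  case (Suc m)
  then show ?case using goodz[OF Suc.prems(1), of k] by (simp add: zeroR_def)
qed simp

lemma stt_0: "good \<omega>s \<Longrightarrow> 2 \<le> k \<Longrightarrow> k + m \<le> l + 1 \<Longrightarrow> stt \<omega>s \<phi> k 0 m = 0"
proof (induction m arbitrary: k)
  case (Suc m)
  then show ?case using goodm[OF Suc.prems(1), of k] by (simp add: midR_def)
qed simp

lemma stt_env2: "\<not> br \<Longrightarrow> good \<omega>s \<Longrightarrow> 2 \<le> k \<Longrightarrow> k + m \<le> l + 1 \<Longrightarrow> 0 < m \<Longrightarrow> 2 \<le> x
   \<Longrightarrow> stt \<omega>s \<phi> k x m = 2 + j0"
proof (induction m arbitrary: k x)
  case (Suc m)
  have w: "\<omega>s k = midR A N br j0" using goodm[OF Suc.prems(2), of k] Suc.prems by simp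
  show ?case
  proof (cases "m = 0")
    case True then show ?thesis using w Suc.prems by (simp add: midR_def)
  next
    case False
    then show ?thesis using w Suc.prems Suc.IH[of "Suc k" "2 + j0"] by (simp add: midR_def)
  qed
qed simp

lemma arith1: "(j::nat) < A ^ e \<Longrightarrow> a < A \<Longrightarrow> j * A + a < A ^ Suc e"
proof -
  assume j: "j < A ^ e" and a: "a < A"
  have "j * A + a < (j + 1) * A" using a by simp
  also have "\<dots> \<le> A ^ e * A" using j by (intro mult_le_mono1) simp
  finally show ?thesis by (simp add: mult.commute)
qed

lemma DL: "br \<Longrightarrow> good \<omega>s \<Longrightarrow> valid_markov_policy A \<phi> \<Longrightarrow> 2 \<le> k \<Longrightarrow> k + m \<le> l + 1 \<Longrightarrow> j < A ^ (k - 2)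
   \<Longrightarrow> \<exists>j'. stt \<omega>s \<phi> k (2 + j) m = 2 + j' \<and> j' < A ^ (k - 2 + m) \<and> j' div A ^ m = j"
proof (induction m arbitrary: k j)
  case 0 then show ?case by simp
next
  case (Suc m)
  have w: "\<omega>s k = midR A N br j0" using goodm[OF Suc.prems(2), of k] Suc.prems by simp
  define a where "a = \<phi> k (2 + j)"
  have a: "a < A" using Suc.prems(3) unfolding a_def valid_markov_policy_def by auto
  have lt: "j * A + a < A ^ (Suc k - 2)"
  proof -
    have "Suc k - 2 = Suc (k - 2)" using Suc.prems(4) by simp
    then show ?thesis using arith1[OF Suc.prems(6) a] by simp
  qed
  have "A ^ (Suc k - 2) \<le> N" using Suc.prems A2 by (intro power_increasing) auto
  then have md: "(j * A + a) mod N = j * A + a" using lt by simp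
  have st: "stt \<omega>s \<phi> k (2 + j) (Suc m) = stt \<omega>s \<phi> (Suc k) (2 + (j * A + a)) m"
    using w Suc.prems(1) md unfolding a_def by (simp add: midR_def)
  obtain j' where j': "stt \<omega>s \<phi> (Suc k) (2 + (j * A + a)) m = 2 + j'" "j' < A ^ (Suc k - 2 + m)"
     "j' div A ^ m = j * A + a"
    using Suc.IH[of "Suc k" "j * A + a"] Suc.prems lt by auto
  have "j' div A ^ Suc m = j"
    using j'(3) a by (simp add: div_mult2_eq mult.commute[of A] power_Suc2)
  moreover have "Suc k - 2 + m = k - 2 + Suc m" using Suc.prems(4) by simp
  ultimately show ?case using st j' by auto
qed

lemma play_late0: "good \<omega>s \<Longrightarrow> l + 2 \<le> k \<Longrightarrow> k + n \<le> H + 1 \<Longrightarrow> play A H l \<pi> \<omega>s n k x = 0"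
proof (induction n arbitrary: k x)
  case (Suc n)
  then show ?case using goodz[OF Suc.prems(1), of k] by (simp add: zeroR_def Let_def)
qed simp

lemma play_from0: "good \<omega>s \<Longrightarrow> 2 \<le> k \<Longrightarrow> k + n \<le> H + 1 \<Longrightarrow> play A H l \<pi> \<omega>s n k 0 = 0"
proof (induction n arbitrary: k)
  case (Suc n)
  show ?case
  proof (cases "k \<le> l")
    case True
    then show ?thesis using goodm[OF Suc.prems(1), of k] Suc by (simp add: midR_def Let_def)
  next
    case False
    show ?thesis
    proof (cases "k = l + 1")
      case True
      obtain J where "\<omega>s (l + 1) = leafR J" using goodl[OF Suc.prems(1)] by auto
      then show ?thesis using True Suc play_late0[OF Suc.prems(1), of "Suc k" n] by (simp add: leafR_def Let_def)
    next
      case False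
      then have "l + 2 \<le> k" using \<open>\<not> k \<le> l\<close> by simp
      then show ?thesis using play_late0[OF Suc.prems(1), of k "Suc n"] Suc.prems by simp
    qed
  qed
qed simp

lemma play_bound: "good \<omega>s \<Longrightarrow> 2 \<le> k \<Longrightarrow> k + n \<le> H + 1 \<Longrightarrow> play A H l \<pi> \<omega>s n k x \<le> 1 \<and> 0 \<le> play A H l \<pi> \<omega>s n k x"
proof (induction n arbitrary: k x)
  case (Suc n)
  show ?case
  proof (cases "k \<le> l")
    case True
    then show ?thesis using goodm[OF Suc.prems(1), of k] Suc by (simp add: midR_def Let_def)
  next
    case False
    show ?thesis
    proof (cases "k = l + 1")
      case True
      obtain J where "\<omega>s (l + 1) = leafR J" using goodl[OF Suc.prems(1)] by auto
      then show ?thesis using True Suc play_late0[OF Suc.prems(1), of "Suc k" n] by (simp add: leafR_def Let_def)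
    next
      case False
      then have "l + 2 \<le> k" using \<open>\<not> k \<le> l\<close> by simp
      then show ?thesis using play_late0[OF Suc.prems(1), of k "Suc n"] Suc.prems by simp
    qed
  qed
qed simp

lemma play_leaf: "good \<omega>s \<Longrightarrow> \<omega>s (l + 1) = leafR J \<Longrightarrow> play A H l \<pi> \<omega>s (H - l) (l + 1) x = (if x = J + 2 then 1 else 0)"
proof -
  assume g: "good \<omega>s" and J: "\<omega>s (l + 1) = leafR J"
  obtain m where m: "H - l = Suc m" using Hl by (cases "H - l") auto
  have "play A H l \<pi> \<omega>s m (l + 2) y = 0" for y using play_late0[OF g, of "l + 2" m] m by simp
  then show ?thesis unfolding m using J by (simp add: leafR_def Let_def)
qed

lemma play_env2: "\<not> br \<Longrightarrow> good \<omega>s \<Longrightarrow> \<omega>s (l + 1) = leafR J \<Longrightarrow> 2 \<le> k \<Longrightarrow> k \<le> l + 1 \<Longrightarrow> k + n = H + 1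
   \<Longrightarrow> 2 \<le> x \<Longrightarrow> (3 \<le> k \<longrightarrow> x = 2 + j0) \<Longrightarrow> play A H l \<pi> \<omega>s n k x = (if j0 = J then 1 else 0)"
proof (induction n arbitrary: k x)
  case 0 then show ?case using Hl by simp
next
  case (Suc n)
  show ?case
  proof (cases "k = l + 1")
    case True
    then have "Suc n = H - l" "x = 2 + j0" using Suc.prems l2 by auto
    then show ?thesis using play_leaf[OF Suc.prems(2,3), of \<pi> x] True by auto
  next
    case False
    then have kl: "k \<le> l" using Suc.prems by simp
    have w: "\<omega>s k = midR A N br j0" using goodm[OF Suc.prems(2) _ kl] Suc.prems by simp
    show ?thesis using Suc.IH[of "Suc k" "2 + j0"] Suc.prems kl w by (simp add: midR_def Let_def)
  qed
qed

definition "\<omega>c = (\<lambda>h. if h = 1 then step1R r else midR A N br j0)"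

lemma hl1: "horizon_len H l 1 = l" using Hl by (simp add: horizon_len_def)

lemma look1: "good \<omega>s \<Longrightarrow> lookahead A H l 1 1 \<omega>s = lookahead A H l 1 1 \<omega>c"
proof -
  assume g: "good \<omega>s"
  have rr: "run \<omega>s \<phi> 1 1 l = run \<omega>c \<phi> 1 1 l" for \<phi>
  proof (rule run_cong)
    fix i assume "1 \<le> i" "i < 1 + l"
    then show "\<omega>s i = \<omega>c i"
      using good1[OF g] goodm[OF g, of i] unfolding \<omega>c_def by (cases "i = 1") auto
  qed
  show ?thesis unfolding lookahead_def hl1 by (rule ext) (simp only: rr)
qed

lemma obj1: "good \<omega>s \<Longrightarrow> valid_markov_policy A \<phi> \<Longrightarrow>
  mpc_objective H l V 1 (lookahead A H l 1 1 \<omega>s) \<phi> =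
    (if \<phi> 1 1 = 0 then V (l + 1) (stt \<omega>s \<phi> 2 2 (l - 1)) else r + V (l + 1) 0)"
proof -
  assume g: "good \<omega>s" and p: "valid_markov_policy A \<phi>"
  have l: "l = Suc (l - 1)" using l2 by simp
  have e: "mpc_objective H l V 1 (lookahead A H l 1 1 \<omega>s) \<phi> = rs \<omega>s \<phi> 1 1 l + V (l + 1) (stt \<omega>s \<phi> 1 1 l)"
    using obj_eq[OF p, of H l 1 V 1 \<omega>s] hl1 l2 Hl by simp
  have r: "rs \<omega>s \<phi> 1 1 l = fst (\<omega>s 1 1 (\<phi> 1 1)) + rs \<omega>s \<phi> 2 (snd (\<omega>s 1 1 (\<phi> 1 1))) (l - 1)"
    by (subst l) (simp add: numeral_2_eq_2)
  have s: "stt \<omega>s \<phi> 1 1 l = stt \<omega>s \<phi> 2 (snd (\<omega>s 1 1 (\<phi> 1 1))) (l - 1)"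
    by (subst l) (simp add: numeral_2_eq_2)
  have z: "rs \<omega>s \<phi> 2 y (l - 1) = 0" for y by (rule rs_mid0[OF g]) (use l2 in auto)
  have z2: "stt \<omega>s \<phi> 2 0 (l - 1) = 0" by (rule stt_0[OF g]) (use l2 in auto)
  show ?thesis unfolding e r s z using good1[OF g] z2 by (simp add: step1R_def)
qed

lemma play1: "good \<omega>s \<Longrightarrow> play A H l \<pi> \<omega>s H 1 1 =
   (if \<pi> 1 1 (lookahead A H l 1 1 \<omega>s) = 0 then play A H l \<pi> \<omega>s (H - 1) 2 2 else r)"
proof -
  assume g: "good \<omega>s"
  have h: "H = Suc (H - 1)" using Hl by simp
  have z: "play A H l \<pi> \<omega>s (H - 1) 2 0 = 0" by (rule play_from0[OF g]) (use Hl in auto)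
  show ?thesis by (subst h) (use z good1[OF g] in \<open>simp add: step1R_def Let_def numeral_2_eq_2\<close>)
qed

lemma exp_AE: "(AE \<omega>s in measure_pmf P. F \<omega>s = G \<omega>s) \<Longrightarrow>
   measure_pmf.expectation P F = measure_pmf.expectation P (G :: _ \<Rightarrow> real)"
  by (rule integral_cong_AE) auto

lemma exp_leaf: "j0 < N \<Longrightarrow> measure_pmf.expectation P (\<lambda>\<omega>s. fst (\<omega>s (l + 1) (2 + j0) 0)) = 1 / N"
proof -
  assume j: "j0 < N"
  have "measure_pmf.expectation P (\<lambda>\<omega>s. fst (\<omega>s (l + 1) (2 + j0) 0)) =
        measure_pmf.expectation (map_pmf (\<lambda>\<omega>s. \<omega>s (l + 1)) P) (\<lambda>w. fst (w (2 + j0) 0))"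
    by simp
  also have "map_pmf (\<lambda>\<omega>s. \<omega>s (l + 1)) P = D (l + 1)"
    using Hl by (subst Pi_pmf_component) auto
  also have "D (l + 1) = map_pmf leafR (pmf_of_set {..<N})" by (rule envD_leaf) (use l2 in simp)
  also have "measure_pmf.expectation (map_pmf leafR (pmf_of_set {..<N})) (\<lambda>w. fst (w (2 + j0) 0))
      = measure_pmf.expectation (pmf_of_set {..<N}) (\<lambda>J. if j0 = J then 1 else 0)"
    by (simp add: leafR_def)
  also have "\<dots> = 1 / N" using j Npos by (subst integral_pmf_of_set) auto
  finally show ?thesis .
qed

lemma ex_good: "\<exists>\<omega>s. good \<omega>s"
proof -
  obtain \<omega>s where "\<omega>s \<in> set_pmf P" using set_pmf_not_empty by (metis ex_in_conv)
  then show ?thesis using AE_good unfolding AE_measure_pmf_iff by blast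
qed

lemma pv: "policy_value A H l D \<pi> 1 = measure_pmf.expectation P (\<lambda>\<omega>s. play A H l \<pi> \<omega>s H 1 1)"
  unfolding policy_value_def by simp

lemma val_ne0: "\<pi> 1 1 (lookahead A H l 1 1 \<omega>c) \<noteq> 0 \<Longrightarrow> policy_value A H l D \<pi> 1 = r"
proof -
  assume a: "\<pi> 1 1 (lookahead A H l 1 1 \<omega>c) \<noteq> 0"
  have "AE \<omega>s in measure_pmf P. play A H l \<pi> \<omega>s H 1 1 = r"
    using AE_good by eventually_elim (use a play1 look1 in \<open>simp\<close>)
  then show ?thesis unfolding pv by (subst exp_AE) auto
qed

lemma val2_0: "\<not> br \<Longrightarrow> \<pi> 1 1 (lookahead A H l 1 1 \<omega>c) = 0 \<Longrightarrow> policy_value A H l D \<pi> 1 = 1 / N"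
proof -
  assume b: "\<not> br" and a: "\<pi> 1 1 (lookahead A H l 1 1 \<omega>c) = 0"
  have "AE \<omega>s in measure_pmf P. play A H l \<pi> \<omega>s H 1 1 = fst (\<omega>s (l + 1) (2 + j0) 0)"
    using AE_good
  proof eventually_elim
    case (elim \<omega>s)
    obtain J where J: "J < N" "\<omega>s (l + 1) = leafR J" using goodl[OF elim] by auto
    have "play A H l \<pi> \<omega>s (H - 1) 2 2 = (if j0 = J then 1 else 0)"
      by (rule play_env2[OF b elim J(2)]) (use l2 Hl in auto)
    then show ?case using a J play1[OF elim] look1[OF elim] by (simp add: leafR_def)
  qed
  then show ?thesis unfolding pv using exp_leaf[OF j0N] by (subst exp_AE) auto
qed

lemma val_le1: "policy_value A H l D \<pi> 1 \<le> 1"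
proof -
  have "AE \<omega>s in measure_pmf P. play A H l \<pi> \<omega>s H 1 1 \<le> 1"
    using AE_good
  proof eventually_elim
    case (elim \<omega>s)
    have "play A H l \<pi> \<omega>s (H - 1) 2 2 \<le> 1" using play_bound[OF elim, of 2 "H - 1"] Hl by auto
    then show ?case using r1 play1[OF elim] by simp
  qed
  then have "measure_pmf.expectation P (\<lambda>\<omega>s. play A H l \<pi> \<omega>s H 1 1) \<le> measure_pmf.expectation P (\<lambda>_. 1)"
    by (intro integral_mono_AE integ)
  then show ?thesis unfolding pv by simp
qed

lemma mpc_step1: "is_mpc_agent A H l V \<pi> \<Longrightarrow> good \<omega>s \<Longrightarrow> \<exists>\<phi>. valid_markov_policy A \<phi> \<and>
   (\<forall>\<psi>. valid_markov_policy A \<psi> \<longrightarrow> mpc_objective H l V 1 (lookahead A H l 1 1 \<omega>s) \<psi> \<le> mpc_objective H l V 1 (lookahead A H l 1 1 \<omega>s) \<phi>)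
   \<and> \<pi> 1 1 (lookahead A H l 1 1 \<omega>c) = \<phi> 1 1"
proof -
  assume m: "is_mpc_agent A H l V \<pi>" and g: "good \<omega>s"
  have "1 \<in> {1..H}" using Hl by simp
  then obtain \<phi> where "\<phi> \<in> mpc_argmax A H l V 1 (lookahead A H l 1 1 \<omega>s)"
    "\<pi> 1 1 (lookahead A H l 1 1 \<omega>s) = \<phi> 1 1"
    using m unfolding is_mpc_agent_def by blast
  then show ?thesis unfolding mpc_argmax_def look1[OF g] by auto
qed

lemma dec_ne0:
  assumes m: "is_mpc_agent A H l V \<pi>"
    and c: "\<And>\<phi> \<omega>s. valid_markov_policy A \<phi> \<Longrightarrow> good \<omega>s \<Longrightarrow> V (l + 1) (stt \<omega>s \<phi> 2 2 (l - 1)) < r + V (l + 1) 0"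
  shows "\<pi> 1 1 (lookahead A H l 1 1 \<omega>c) \<noteq> 0"
proof -
  obtain \<omega>s where g: "good \<omega>s" using ex_good by blast
  obtain \<phi> where p: "valid_markov_policy A \<phi>" and mx: "\<And>\<psi>. valid_markov_policy A \<psi> \<Longrightarrow>
     mpc_objective H l V 1 (lookahead A H l 1 1 \<omega>s) \<psi> \<le> mpc_objective H l V 1 (lookahead A H l 1 1 \<omega>s) \<phi>"
    and e: "\<pi> 1 1 (lookahead A H l 1 1 \<omega>c) = \<phi> 1 1"
    using mpc_step1[OF m g] by blast
  have p1: "valid_markov_policy A (\<lambda>_ _. 1)" using A2 by (simp add: valid_markov_policy_def)
  show ?thesis
  proof
    assume "\<pi> 1 1 (lookahead A H l 1 1 \<omega>c) = 0"
    then have "\<phi> 1 1 = 0" using e by simp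
    then show False using mx[OF p1] obj1[OF g p1] obj1[OF g p] c[OF p g] by simp
  qed
qed

lemma dec_0:
  assumes m: "is_mpc_agent A H l V \<pi>"
    and c: "\<And>\<omega>s. good \<omega>s \<Longrightarrow> r + V (l + 1) 0 < V (l + 1) (stt \<omega>s (\<lambda>_ _. 0) 2 2 (l - 1))"
  shows "\<pi> 1 1 (lookahead A H l 1 1 \<omega>c) = 0"
proof -
  obtain \<omega>s where g: "good \<omega>s" using ex_good by blast
  obtain \<phi> where p: "valid_markov_policy A \<phi>" and mx: "\<And>\<psi>. valid_markov_policy A \<psi> \<Longrightarrow>
     mpc_objective H l V 1 (lookahead A H l 1 1 \<omega>s) \<psi> \<le> mpc_objective H l V 1 (lookahead A H l 1 1 \<omega>s) \<phi>"
    and e: "\<pi> 1 1 (lookahead A H l 1 1 \<omega>c) = \<phi> 1 1"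
    using mpc_step1[OF m g] by blast
  have p0: "valid_markov_policy A (\<lambda>_ _. 0)" using A2 by (simp add: valid_markov_policy_def)
  show ?thesis
  proof (rule ccontr)
    assume "\<pi> 1 1 (lookahead A H l 1 1 \<omega>c) \<noteq> 0"
    then have "\<phi> 1 1 \<noteq> 0" using e by simp
    then show False using mx[OF p0] obj1[OF g p0] obj1[OF g p] c[OF g] by simp
  qed
qed

lemma stt_env1: "br \<Longrightarrow> good \<omega>s \<Longrightarrow> valid_markov_policy A \<phi> \<Longrightarrow> \<exists>j'<N. stt \<omega>s \<phi> 2 2 (l - 1) = 2 + j'"
  using DL[of \<omega>s \<phi> 2 "l - 1" 0] l2 by auto

definition "Vstar = (\<lambda>h (s::nat). if h = l + 1 \<and> 2 \<le> s then (2::real) else 0)"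

lemma objk: "good \<omega>s \<Longrightarrow> \<omega>s (l + 1) = leafR J \<Longrightarrow> 2 \<le> k \<Longrightarrow> k \<le> l \<Longrightarrow> valid_markov_policy A \<phi> \<Longrightarrow>
  mpc_objective H l Vstar k (lookahead A H l k x \<omega>s) \<phi> = (if stt \<omega>s \<phi> k x (l + 1 - k) = J + 2 then 1 else 0)"
proof -
  assume g: "good \<omega>s" and J: "\<omega>s (l + 1) = leafR J" and k: "2 \<le> k" "k \<le> l" and p: "valid_markov_policy A \<phi>"
  define L where "L = horizon_len H l k"
  have L: "L = min l (H - k + 1)" unfolding L_def horizon_len_def by simp
  define q where "q = L - (l + 2 - k)"
  have q: "L = (l + 1 - k) + Suc q" using L k Hl unfolding q_def by auto
  have Lp: "L > 0" using q by simp
  have e: "mpc_objective H l Vstar k (lookahead A H l k x \<omega>s) \<phi> = rs \<omega>s \<phi> k x L"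
    using obj_eq[OF p, of H l k Vstar x \<omega>s] Lp q k unfolding L_def[symmetric] by (auto simp: Vstar_def)
  have kk: "k + (l + 1 - k) = l + 1" using k by simp
  have "rs \<omega>s \<phi> k x L = rs \<omega>s \<phi> k x (l + 1 - k) + rs \<omega>s \<phi> (l + 1) (stt \<omega>s \<phi> k x (l + 1 - k)) (Suc q)"
    unfolding q rs_add kk ..
  also have "rs \<omega>s \<phi> k x (l + 1 - k) = 0" by (rule rs_mid0[OF g]) (use k in auto)
  also have "rs \<omega>s \<phi> (l + 1) y (Suc q) = (if y = J + 2 then 1 else 0)" for y
  proof -
    have "l + 2 + q \<le> H + 1" using q L k by linarith
    then have "rs \<omega>s \<phi> (l + 2) z q = 0" for z by (intro rs_late0[OF g]) auto
    then show ?thesis using J by (simp add: leafR_def)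
  qed
  finally show ?thesis using e by simp
qed

definition "psiJ J = (\<lambda>t s. (J div A ^ (l - t)) mod A)"

lemma psiJ_valid: "valid_markov_policy A (psiJ J)"
  using A2 by (simp add: valid_markov_policy_def psiJ_def)

lemma digit: "(J div (A::nat) ^ Suc m) * A + (J div A ^ m) mod A = J div A ^ m"
proof -
  have "J div A ^ Suc m = (J div A ^ m) div A" by (simp only: power_Suc2 div_mult2_eq)
  then show ?thesis by (simp add: div_mult_mod_eq)
qed

lemma fw: "br \<Longrightarrow> good \<omega>s \<Longrightarrow> J < N \<Longrightarrow> k + m = l + 1 \<Longrightarrow> 2 \<le> k \<Longrightarrow>
   stt \<omega>s (psiJ J) k (2 + J div A ^ m) m = J + 2"
proof (induction m arbitrary: k)
  case 0 then show ?case by simp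
next
  case (Suc m)
  have w: "\<omega>s k = midR A N br j0" using goodm[OF Suc.prems(2), of k] Suc.prems by simp
  have lk: "l - k = m" using Suc.prems by simp
  have dl: "J div A ^ m \<le> J" by (rule div_le_dividend)
  have md: "(J div A ^ m) mod N = J div A ^ m" using le_less_trans[OF dl Suc.prems(3)] by simp
  have "stt \<omega>s (psiJ J) k (2 + J div A ^ Suc m) (Suc m) = stt \<omega>s (psiJ J) (Suc k) (2 + J div A ^ m) m"
    using w Suc.prems(1) md digit[of J m] by (simp add: midR_def psiJ_def lk)
  also have "\<dots> = J + 2" using Suc.IH[of "Suc k"] Suc.prems by simp
  finally show ?case .
qed

abbreviation "pistar \<equiv> mpcpi A H l Vstar"

lemma steer: "br \<Longrightarrow> good \<omega>s \<Longrightarrow> \<omega>s (l + 1) = leafR J \<Longrightarrow> J < N \<Longrightarrow> k + m = l + 1 \<Longrightarrow> 2 \<le> k \<Longrightarrow>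
   play A H l pistar \<omega>s (H + 1 - k) k (2 + J div A ^ m) = 1"
proof (induction m arbitrary: k)
  case 0
  then have "H + 1 - k = H - l" "k = l + 1" by auto
  then show ?case using play_leaf[OF 0(2,3), of pistar "2 + J"] by simp
next
  case (Suc m)
  note g = Suc.prems(2) and J = Suc.prems(3)
  have k: "k \<le> l" "1 \<le> k" "k \<le> H" using Suc.prems Hl by auto
  define j where "j = J div A ^ Suc m"
  define x where "x = 2 + j"
  have mpc: "is_mpc_agent A H l Vstar pistar" using A2 by (intro mpcpi_is) simp
  obtain \<phi> where ph: "\<phi> \<in> mpc_argmax A H l Vstar k (lookahead A H l k x \<omega>s)"
    and a_eq: "pistar k x (lookahead A H l k x \<omega>s) = \<phi> k x"
    using mpc k unfolding is_mpc_agent_def by fastforce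
  have p: "valid_markov_policy A \<phi>" using ph by (simp add: mpc_argmax_def)
  have lk: "l + 1 - k = Suc m" using Suc.prems by simp
  have "mpc_objective H l Vstar k (lookahead A H l k x \<omega>s) (psiJ J) \<le> mpc_objective H l Vstar k (lookahead A H l k x \<omega>s) \<phi>"
    using ph psiJ_valid unfolding mpc_argmax_def by blast
  moreover have "mpc_objective H l Vstar k (lookahead A H l k x \<omega>s) (psiJ J) = 1"
    unfolding objk[OF g J Suc.prems(6) k(1) psiJ_valid] lk x_def j_def
    using fw[OF Suc.prems(1) g Suc.prems(4), of k "Suc m"] Suc.prems by simp
  ultimately have reach: "stt \<omega>s \<phi> k x (Suc m) = J + 2"
    unfolding objk[OF g J Suc.prems(6) k(1) p] lk by (auto split: if_splits)
  define a where "a = \<phi> k x"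
  have a: "a < A" using p unfolding a_def valid_markov_policy_def by auto
  have jl: "j < A ^ (k - 2)"
  proof -
    have "l - 1 = (k - 2) + Suc m" using Suc.prems by simp
    then have "J < A ^ (k - 2) * A ^ Suc m" using Suc.prems(4) by (simp add: power_add ac_simps)
    then show ?thesis unfolding j_def by (rule less_mult_imp_div_less)
  qed
  have lt: "j * A + a < A ^ (Suc k - 2)"
  proof -
    have "Suc k - 2 = Suc (k - 2)" using Suc.prems(6) by simp
    then show ?thesis using arith1[OF jl a] by simp
  qed
  have "A ^ (Suc k - 2) \<le> N" using Suc.prems A2 by (intro power_increasing) auto
  then have md: "(j * A + a) mod N = j * A + a" using lt by simp
  have w: "\<omega>s k = midR A N br j0" using goodm[OF g, of k] Suc.prems by simp
  have st: "stt \<omega>s \<phi> k x (Suc m) = stt \<omega>s \<phi> (Suc k) (2 + (j * A + a)) m"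
    using w Suc.prems(1) md unfolding a_def x_def by (simp add: midR_def)
  obtain j' where j': "stt \<omega>s \<phi> (Suc k) (2 + (j * A + a)) m = 2 + j'" "j' div A ^ m = j * A + a"
    using DL[OF Suc.prems(1) g p, of "Suc k" m "j * A + a"] Suc.prems lt by auto
  have "j' = J" using j' reach st by simp
  then have jd: "J div A ^ m = j * A + a" using j' by simp
  have h: "H + 1 - k = Suc (H + 1 - Suc k)" using k by simp
  have IH: "play A H l pistar \<omega>s (H + 1 - Suc k) (Suc k) (2 + J div A ^ m) = 1"
    using Suc.IH[of "Suc k"] Suc.prems by simp
  show ?case
    unfolding h j_def[symmetric] x_def[symmetric]
    using w Suc.prems(1) md IH jd a_eq unfolding a_def x_def by (simp add: midR_def Let_def)
qed

lemma val_star: "br \<Longrightarrow> policy_value A H l D pistar 1 = 1"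
proof -
  assume b: "br"
  have mpc: "is_mpc_agent A H l Vstar pistar" using A2 by (intro mpcpi_is) simp
  have a0: "pistar 1 1 (lookahead A H l 1 1 \<omega>c) = 0"
  proof (rule dec_0[OF mpc])
    fix \<omega>s assume g: "good \<omega>s"
    have p0: "valid_markov_policy A (\<lambda>_ _. 0)" using A2 by (simp add: valid_markov_policy_def)
    obtain j' where "stt \<omega>s (\<lambda>_ _. 0) 2 2 (l - 1) = 2 + j'" using stt_env1[OF b g p0] by auto
    then show "r + Vstar (l + 1) 0 < Vstar (l + 1) (stt \<omega>s (\<lambda>_ _. 0) 2 2 (l - 1))"
      using r1 by (simp add: Vstar_def)
  qed
  have "AE \<omega>s in measure_pmf P. play A H l pistar \<omega>s H 1 1 = 1"
    using AE_good
  proof eventually_elim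
    case (elim \<omega>s)
    obtain J where J: "J < N" "\<omega>s (l + 1) = leafR J" using goodl[OF elim] by auto
    have "play A H l pistar \<omega>s (H + 1 - 2) 2 (2 + J div A ^ (l - 1)) = 1"
      by (rule steer[OF b elim J(2) J(1)]) (use l2 in auto)
    then have "play A H l pistar \<omega>s (H - 1) 2 2 = 1" using J(1) by (simp add: numeral_2_eq_2)
    then show ?case using a0 play1[OF elim] look1[OF elim] by simp
  qed
  then show ?thesis unfolding pv by (subst exp_AE) auto
qed

end


lemma opt_eq:
  assumes "\<And>\<pi>. is_lookahead_policy A \<pi> \<Longrightarrow> policy_value A H l D \<pi> s \<le> c"
    and "is_lookahead_policy A \<pi>0" and "policy_value A H l D \<pi>0 s = c"
  shows "opt_value A H l D s = c"
  unfolding opt_value_def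
  by (rule cSup_eq_maximum) (use assms in auto)

lemma mpc_look: "is_mpc_agent A H l V \<pi> \<Longrightarrow> is_lookahead_policy A \<pi>"
  by (simp add: is_mpc_agent_def)

context env begin

lemma val2_le: "\<not> br \<Longrightarrow> 1 / N \<le> r \<Longrightarrow> policy_value A H l D \<pi> 1 \<le> r"
  using val_ne0[of \<pi>] val2_0[of \<pi>] by (cases "\<pi> 1 1 (lookahead A H l 1 1 \<omega>c) = 0") auto

lemma val_zeroV: "0 < r \<Longrightarrow> policy_value A H l D (mpcpi A H l (\<lambda>_ _. 0)) 1 = r"
proof -
  assume r: "0 < r"
  have mpc: "is_mpc_agent A H l (\<lambda>_ _. 0) (mpcpi A H l (\<lambda>_ _. 0))" using A2 by (intro mpcpi_is) simp
  have "mpcpi A H l (\<lambda>_ _. 0) 1 1 (lookahead A H l 1 1 \<omega>c) \<noteq> 0"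
    by (rule dec_ne0[OF mpc]) (use r in simp)
  then show ?thesis by (rule val_ne0)
qed

lemma rd_eq: "reward_dist A D (l + 1) s = reward_dist A (envD A l True 0 0) (l + 1) s"
proof -
  have "D (l + 1) = envD A l True 0 0 (l + 1)"
    using envD_leaf[of l A br r j0] envD_leaf[of l A True 0 0] l2 by simp
  then show ?thesis unfolding reward_dist_def by simp
qed

lemma nS_bound: "N + 2 \<le> A ^ l + l + 1"
proof -
  have "N \<le> A ^ l" using A2 by (intro power_increasing) auto
  then show ?thesis using l2 by simp
qed

end

theorem claim2:
  fixes l A H :: nat
    and Vproc :: "nat \<Rightarrow> mdp_dist \<Rightarrow> nat \<Rightarrow> nat \<Rightarrow> real"
    and agent :: "nat \<Rightarrow> mdp_dist \<Rightarrow> lookahead_policy"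
    and f :: "nat \<Rightarrow> (nat \<Rightarrow> real) pmf \<Rightarrow> real"
  assumes "l \<ge> 2" and "A \<ge> 2" and "H \<ge> l + 1"
    and f_nonneg: "\<forall>h\<in>{1..H}. \<forall>R. f h R \<ge> 0"
    and semi_terminal_values: "\<forall>nS D. valid_mdp A H nS D \<longrightarrow>
         (\<forall>h\<in>{1..H}. \<forall>s. semi_terminal A H nS D h s \<longrightarrow>
            Vproc nS D h s = f h (reward_dist A D h s))"
    and mpc: "\<forall>nS D. valid_mdp A H nS D \<longrightarrow> is_mpc_agent A H l (Vproc nS D) (agent nS D)"
  shows "\<exists>nS D s1. valid_mdp A H nS D \<and> deterministic_transitions A H nS D
           \<and> nS \<le> A ^ l + l + 1 \<and> s1 < nS
           \<and> opt_value A H l D s1 > 0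
           \<and> policy_value A H l D (agent nS D) s1
               \<le> real A powr (1 - real l / 2) * opt_value A H l D s1
           \<and> (\<exists>V \<pi>. is_mpc_agent A H l V \<pi> \<and> policy_value A H l D \<pi> s1 = opt_value A H l D s1)"
proof -
  note l2 = assms(1) and A2 = assms(2) and Hl = assms(3)
  define N where "N = A ^ (l - 1)"
  define \<kappa> where "\<kappa> = real A powr (1 - real l / 2)"
  have Ar: "real A \<ge> 2" using A2 by simp
  have kpos: "\<kappa> > 0" unfolding \<kappa>_def using Ar by simp
  have kle: "\<kappa> \<le> 1"
  proof -
    have "\<kappa> \<le> real A powr 0" unfolding \<kappa>_def using Ar l2 by (intro powr_mono) auto
    then show ?thesis using Ar by simp
  qed
  have Nr: "real N = real A powr (real l - 1)"
    unfolding N_def using Ar l2 by (simp add: powr_realpow[symmetric] of_nat_diff)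
  have Nk: "real N * \<kappa> \<ge> 1"
  proof -
    have "real N * \<kappa> = real A powr (real l / 2)" unfolding Nr \<kappa>_def
      using Ar by (simp add: powr_add[symmetric])
    also have "\<dots> \<ge> real A powr 0" using Ar by (intro powr_mono) auto
    finally show ?thesis using Ar by simp
  qed
  have Nkk: "real N * \<kappa> * \<kappa> = real A"
  proof -
    have "real N * \<kappa> * \<kappa> = real A powr 1" unfolding Nr \<kappa>_def
      using Ar by (simp add: powr_add[symmetric])
    then show ?thesis using Ar by simp
  qed
  have Npos: "N > 0" unfolding N_def using A2 by simp
  define Dref where "Dref = envD A l True 0 0"
  define c0 where "c0 = f (l + 1) (reward_dist A Dref (l + 1) 0)"
  define g where "g j = f (l + 1) (reward_dist A Dref (l + 1) (2 + j))" for j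
  have lH: "l + 1 \<in> {1..H}" using Hl by simp
  show ?thesis
  proof (cases "\<exists>j0<N. c0 + \<kappa> \<le> g j0")
    case False
    interpret e: env A l H True \<kappa> 0
      by unfold_locales (use l2 A2 Hl kpos kle Npos N_def in auto)
    let ?D = "envD A l True \<kappa> 0"
    have val: "valid_mdp A H (N + 2) ?D" using e.valid N_def by simp
    have Vp: "Vproc (N + 2) ?D (l + 1) s = f (l + 1) (reward_dist A Dref (l + 1) s)" if "s < N + 2" for s
      using semi_terminal_values val lH e.semi[of s] that e.rd_eq[of s] N_def Dref_def by auto
    have ag: "is_mpc_agent A H l (Vproc (N + 2) ?D) (agent (N + 2) ?D)" using mpc val by blast
    have a1: "agent (N + 2) ?D 1 1 (lookahead A H l 1 1 e.\<omega>c) \<noteq> 0"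
    proof (rule e.dec_ne0[OF ag])
      fix \<phi> \<omega>s assume p: "valid_markov_policy A \<phi>" and gd: "e.good \<omega>s"
      obtain j' where j': "j' < N" "stt \<omega>s \<phi> 2 2 (l - 1) = 2 + j'" using e.stt_env1[OF _ gd p] N_def by auto
      have "g j' < c0 + \<kappa>" using False j' by auto
      then show "Vproc (N + 2) ?D (l + 1) (stt \<omega>s \<phi> 2 2 (l - 1)) < \<kappa> + Vproc (N + 2) ?D (l + 1) 0"
        using Vp[of "2 + j'"] Vp[of 0] j' unfolding g_def c0_def by simp
    qed
    have vag: "policy_value A H l ?D (agent (N + 2) ?D) 1 = \<kappa>" using e.val_ne0[of "agent (N + 2) ?D"] a1 by simp
    have mst: "is_mpc_agent A H l e.Vstar e.pistar" using A2 by (intro mpcpi_is) simp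
    have opt: "opt_value A H l ?D 1 = 1"
      by (rule opt_eq[OF _ mpc_look[OF mst]]) (use e.val_le1 e.val_star in auto)
    show ?thesis
      apply (rule exI[of _ "N + 2"], rule exI[of _ ?D], rule exI[of _ 1])
      using val e.det e.nS_bound N_def opt vag kle mst e.val_star by (auto simp: \<kappa>_def)
  next
    case True
    then obtain j0 where j0: "j0 < N" "c0 + \<kappa> \<le> g j0" by auto
    define r where "r = 1 / (real N * \<kappa>)"
    have rpos: "r > 0" unfolding r_def using kpos Npos by simp
    have rle: "r \<le> 1" unfolding r_def using Nk by simp
    have rk: "r < \<kappa>"
    proof -
      have "1 < real N * \<kappa> * \<kappa>" using Nkk Ar by simp
      then show ?thesis unfolding r_def using kpos Npos by (simp add: field_simps)
    qed
    have Nr2: "1 / real N \<le> r" unfolding r_def using kle kpos Npos by (simp add: field_simps)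
    have kr: "\<kappa> * r = 1 / real N" unfolding r_def using kpos Npos by simp
    interpret e: env A l H False r j0
      by unfold_locales (use l2 A2 Hl j0 rpos rle N_def in auto)
    let ?D = "envD A l False r j0"
    have val: "valid_mdp A H (N + 2) ?D" using e.valid N_def by simp
    have Vp: "Vproc (N + 2) ?D (l + 1) s = f (l + 1) (reward_dist A Dref (l + 1) s)" if "s < N + 2" for s
      using semi_terminal_values val lH e.semi[of s] that e.rd_eq[of s] N_def Dref_def by auto
    have ag: "is_mpc_agent A H l (Vproc (N + 2) ?D) (agent (N + 2) ?D)" using mpc val by blast
    have a1: "agent (N + 2) ?D 1 1 (lookahead A H l 1 1 e.\<omega>c) = 0"
    proof (rule e.dec_0[OF ag])
      fix \<omega>s assume gd: "e.good \<omega>s"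
      have "stt \<omega>s (\<lambda>_ _. 0) 2 2 (l - 1) = 2 + j0" by (rule e.stt_env2[OF _ gd]) (use l2 in auto)
      then show "r + Vproc (N + 2) ?D (l + 1) 0 < Vproc (N + 2) ?D (l + 1) (stt \<omega>s (\<lambda>_ _. 0) 2 2 (l - 1))"
        using Vp[of "2 + j0"] Vp[of 0] j0 rk unfolding g_def c0_def by simp
    qed
    have vag: "policy_value A H l ?D (agent (N + 2) ?D) 1 = 1 / real N"
      using e.val2_0[of "agent (N + 2) ?D"] a1 N_def by simp
    have m0: "is_mpc_agent A H l (\<lambda>_ _. 0) (mpcpi A H l (\<lambda>_ _. 0))" using A2 by (intro mpcpi_is) simp
    have opt: "opt_value A H l ?D 1 = r"
      by (rule opt_eq[OF _ mpc_look[OF m0]]) (use e.val2_le Nr2 N_def e.val_zeroV rpos in auto)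
    show ?thesis
      apply (rule exI[of _ "N + 2"], rule exI[of _ ?D], rule exI[of _ 1])
      using val e.det e.nS_bound N_def opt vag kr rpos m0 e.val_zeroV[OF rpos] by (auto simp: \<kappa>_def)
  qed
qed

end
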